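(* Let $\xi\in(0,1)$, $C=1-\xi$, and let $\lambda(x)=\sum_{i\ge2}\lambda_ix^{i-1}$, $\rho(x)=\sum_{j\ge2}\rho_jx^{j-1}$ be degree distributions. Let $b=\int_0^1\rho(x)dx$, $R=1-\frac{\int_0^1\rho(x)dx}{\int_0^1\lambda(x)dx}$ and $\Delta R=C-R$. Then $$\int_0^1\rho(1-x)\,dx-\int_0^\xi\bigl[1-\lambda^{-1}(x/\xi)\bigr]dx=\frac{b\,\Delta R}{\xi+\Delta R},$$ where $\lambda^{-1}$ denotes the inverse function of $\lambda:[0,1]\to[0,1]$.
   Context: A degree distribution is a polynomial $\gamma(x)=\sum_{k\ge2}\gamma_kx^{k-1}$ with $\gamma_k\ge0$ and $\sum_k\gamma_k=1$; in particular $\lambda$ is strictly increasing on $[0,1]$ with $\lambda(0)=0$, $\lambda(1)=1$, so $\lambda^{-1}$ is well defined on $[0,1]$. *)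

theory Defs
  imports "HOL-Analysis.Analysis" "HOL-Computational_Algebra.Polynomial"
begin

text \<open>A degree distribution gamma(x) = sum over k>=2 of gamma_k x^(k-1), represented as a real
polynomial whose coefficient of x^(k-1) is gamma_k: constant coefficient 0, all coefficients
nonnegative, coefficients summing to 1.\<close>
definition degree_distribution :: "real poly \<Rightarrow> bool" where
  "degree_distribution p \<longleftrightarrow>
     coeff p 0 = 0 \<and> (\<forall>i. coeff p i \<ge> 0) \<and> (\<Sum>i\<le>degree p. coeff p i) = 1"

end

theory Submission imports Defs begin

lemma poly_cont: "continuous_on A (poly (p::real poly))"
  using continuous_on_poly[OF continuous_on_id, of A p] by (simp add: id_def)

lemma poly_int: "poly (p::real poly) integrable_on {a..b}"
  by (rule integrable_continuous_real[OF poly_cont])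

lemma dd_exists:
  assumes "degree_distribution p"
  shows "\<exists>i. i \<le> degree p \<and> i \<noteq> 0 \<and> coeff p i > 0"
proof (rule ccontr)
  assume "\<not> ?thesis"
  with assms have "\<forall>i\<le>degree p. coeff p i = 0"
    unfolding degree_distribution_def by (metis order.not_eq_order_implies_strict)
  hence "(\<Sum>i\<le>degree p. coeff p i) = 0" by simp
  with assms show False unfolding degree_distribution_def by simp
qed

lemma dd_01:
  assumes "degree_distribution p"
  shows "poly p 0 = 0" "poly p 1 = 1"
  using assms unfolding degree_distribution_def by (auto simp: poly_altdef poly_0_coeff_0)

lemma dd_mono:
  assumes "degree_distribution p" "0 \<le> x" "x < y" "y \<le> 1"
  shows "poly p x < poly p y"
proof -
  obtain i where i: "i \<le> degree p" "i \<noteq> 0" "coeff p i > 0" using dd_exists[OF assms(1)] by blast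
  have nn: "\<forall>j. coeff p j \<ge> 0" using assms(1) unfolding degree_distribution_def by simp
  have "0 < (\<Sum>j\<le>degree p. coeff p j * (y ^ j - x ^ j))"
  proof (rule sum_pos2[of _ i])
    show "0 < coeff p i * (y ^ i - x ^ i)" using i assms
      by (simp add: power_strict_mono)
    show "\<And>j. j \<in> {..degree p} \<Longrightarrow> 0 \<le> coeff p j * (y ^ j - x ^ j)"
      using nn assms by (simp add: power_mono)
  qed (use i in auto)
  also have "\<dots> = poly p y - poly p x"
    by (simp add: poly_altdef algebra_simps sum_subtractf)
  finally show ?thesis by simp
qed

lemma dd_lower:
  assumes "degree_distribution p" "0 \<le> x" "x \<le> 1"
  shows "x ^ degree p \<le> poly p x"
proof -
  have nn: "\<forall>j. coeff p j \<ge> 0" and s: "(\<Sum>i\<le>degree p. coeff p i) = 1"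
    using assms(1) unfolding degree_distribution_def by simp_all
  have "x ^ degree p = (\<Sum>i\<le>degree p. coeff p i * x ^ degree p)"
    by (simp add: sum_distrib_right[symmetric] s)
  also have "\<dots> \<le> (\<Sum>i\<le>degree p. coeff p i * x ^ i)"
    by (rule sum_mono) (use nn assms in \<open>auto intro!: mult_left_mono power_decreasing\<close>)
  finally show ?thesis by (simp add: poly_altdef)
qed

lemma dd_int_pos:
  assumes "degree_distribution p"
  shows "0 < integral {0..1} (poly p)"
proof -
  define d where "d = degree p"
  have "((\<lambda>x::real. x ^ d) has_integral ((1::real) ^ Suc d / Suc d - 0 ^ Suc d / Suc d)) {0..1}"
    apply (rule fundamental_theorem_of_calculus)
     apply (auto intro!: derivative_eq_intros simp: has_real_derivative_iff_has_vector_derivative[symmetric])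
    apply (cases d)
     apply (auto simp: field_simps)
    done
  hence h: "((\<lambda>x::real. x ^ d) has_integral (1 / Suc d)) {0..1}" by simp
  have "integral {0..1} (\<lambda>x::real. x ^ d) \<le> integral {0..1} (poly p)"
    by (rule integral_le) (use h dd_lower[OF assms] in \<open>auto simp: d_def poly_int\<close>)
  moreover have "integral {0..1} (\<lambda>x::real. x ^ d) = 1 / Suc d" using h by (simp add: integral_unique)
  ultimately show ?thesis by (smt (verit) divide_pos_pos of_nat_0_less_iff zero_less_Suc)
qed

lemma dd_inv:
  assumes dd: "degree_distribution p"
  shows "inj_on (poly p) {0..1}" "poly p ` {0..1} = {0..1}"
    "continuous_on {0..1} (the_inv_into {0..1} (poly p))"
proof -
  let ?L = "poly p" and ?g = "the_inv_into {0..1} (poly p)"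
  have inj: "inj_on ?L {0..1}"
    by (rule linorder_inj_onI) (use dd_mono[OF dd] in \<open>auto simp: less_imp_neq\<close>)
  have img: "?L ` {0..1} = {0..1}"
  proof
    show "?L ` {0..1} \<subseteq> {0..1}"
    proof
      fix y assume "y \<in> ?L ` {0..1}"
      then obtain x where x: "x \<in> {0..1}" "y = ?L x" by auto
      have "?L 0 \<le> ?L x" "?L x \<le> ?L 1"
        using x dd_mono[OF dd, of 0 x] dd_mono[OF dd, of x 1] by (cases "x = 0"; cases "x = 1"; auto)+
      thus "y \<in> {0..1}" using x dd_01[OF dd] by auto
    qed
  next
    show "{0..1} \<subseteq> ?L ` {0..1}"
    proof
      fix y :: real assume y: "y \<in> {0..1}"
      have "\<exists>x\<ge>0. x \<le> 1 \<and> ?L x = y"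
        by (rule IVT') (use y dd_01[OF dd] poly_cont in auto)
      thus "y \<in> ?L ` {0..1}" by auto
    qed
  qed
  have gcont: "continuous_on {0..1} ?g"
    using continuous_on_inv[OF poly_cont[of "{0..1}" p], where g="?g"] inj img
    by (auto simp: the_inv_into_f_f)
  show "inj_on (poly p) {0..1}" "poly p ` {0..1} = {0..1}" "continuous_on {0..1} (the_inv_into {0..1} (poly p))"
    using inj img gcont by auto
qed

lemma inv_integral:
  assumes dd: "degree_distribution p"
  shows "integral {0..1} (the_inv_into {0..1} (poly p)) = 1 - integral {0..1} (poly p)"
proof -
  let ?L = "poly p" and ?g = "the_inv_into {0..1} (poly p)"
  have inj: "inj_on ?L {0..1}"
    by (rule linorder_inj_onI) (use dd_mono[OF dd] in \<open>auto simp: less_imp_neq\<close>)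
  have img: "?L ` {0..1} = {0..1}"
  proof
    show "?L ` {0..1} \<subseteq> {0..1}"
    proof
      fix y assume "y \<in> ?L ` {0..1}"
      then obtain x where x: "x \<in> {0..1}" "y = ?L x" by auto
      have "?L 0 \<le> ?L x" "?L x \<le> ?L 1"
        using x dd_mono[OF dd, of 0 x] dd_mono[OF dd, of x 1] by (cases "x = 0"; cases "x = 1"; auto)+
      thus "y \<in> {0..1}" using x dd_01[OF dd] by auto
    qed
  next
    show "{0..1} \<subseteq> ?L ` {0..1}"
    proof
      fix y :: real assume y: "y \<in> {0..1}"
      have "\<exists>x\<ge>0. x \<le> 1 \<and> ?L x = y"
        by (rule IVT') (use y dd_01[OF dd] poly_cont in auto)
      thus "y \<in> ?L ` {0..1}" by auto
    qed
  qed
  have gcont: "continuous_on {0..1} ?g"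
    using continuous_on_inv[OF poly_cont[of "{0..1}" p], where g="?g"] inj img
    by (auto simp: the_inv_into_f_f)
  have "((\<lambda>x. poly (pderiv p) x *\<^sub>R ?g (?L x)) has_integral (integral {?L 0..?L 1} ?g)) {0..1}"
    by (rule has_integral_substitution[where c=0 and d=1])
       (use dd_01[OF dd] img gcont in \<open>auto intro: DERIV_subset[OF poly_DERIV]\<close>)
  hence h1: "((\<lambda>x. x * poly (pderiv p) x) has_integral (integral {0..1} ?g)) {0..1}"
    using dd_01[OF dd] inj by (subst has_integral_cong[where g="\<lambda>x. poly (pderiv p) x *\<^sub>R ?g (?L x)"])
       (auto simp: the_inv_into_f_f mult.commute)
  have h2: "((\<lambda>x. ?L x + x * poly (pderiv p) x) has_integral (1 * ?L 1 - 0 * ?L 0)) {0..1}"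
    by (rule fundamental_theorem_of_calculus)
       (auto intro!: derivative_eq_intros DERIV_subset[OF poly_DERIV]
         simp: has_real_derivative_iff_has_vector_derivative[symmetric])
  have h3: "(?L has_integral integral {0..1} ?L) {0..1}" using poly_int by blast
  have "((\<lambda>x. x * poly (pderiv p) x) has_integral (1 - integral {0..1} ?L)) {0..1}"
    using has_integral_diff[OF h2 h3] dd_01[OF dd] by simp
  thus ?thesis using h1 has_integral_unique by blast
qed

lemma refl_int: fixes rho :: "real poly" shows "integral {0..1} (\<lambda>x. poly rho (1 - x)) = integral {0..1} (poly rho)"
proof -
  have "((\<lambda>x. (-1) *\<^sub>R poly rho (1 - x)) has_integral
          (integral {1 - 0..1 - 1} (poly rho) - integral {1 - 1..1 - 0} (poly rho))) {0..1}"
  proof (rule has_integral_substitution_general[where s="{}" and c=0 and d=1 and a=0 and b=1 and g="\<lambda>x. 1 - x" and f="poly rho" and g'="\<lambda>_. -1"])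
    show "(\<lambda>x::real. 1 - x) ` {0..1} \<subseteq> {0..1}" by auto
    show "continuous_on {0..1} (poly rho)" by (rule poly_cont)
    show "continuous_on {0..1} (\<lambda>x::real. 1 - x)" by (intro continuous_intros)
    show "\<And>x. x \<in> {0..1} - {} \<Longrightarrow> ((\<lambda>x::real. 1 - x) has_real_derivative - 1) (at x within {0..1})"
      by (auto intro!: derivative_eq_intros)
  qed simp_all
  moreover have "integral {1..0::real} (poly rho) = 0" by simp
  ultimately have "((\<lambda>x. - poly rho (1 - x)) has_integral (- integral {0..1} (poly rho))) {0..1}"
    by simp
  from has_integral_neg[OF this] show ?thesis by (simp add: integral_unique)
qed

lemma scale_int:
  fixes g :: "real \<Rightarrow> real" and \<xi> :: real
  assumes xi: "0 < \<xi>" and gc: "continuous_on {0..1} g"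
  shows "integral {0..\<xi>} (\<lambda>x. 1 - g (x / \<xi>)) = \<xi> * (1 - integral {0..1} g)"
proof -
  have "((\<lambda>x. (1 / \<xi>) *\<^sub>R (1 - g (x / \<xi>))) has_integral
          integral {0 / \<xi>..\<xi> / \<xi>} (\<lambda>u. 1 - g u)) {0..\<xi>}"
  proof (rule has_integral_substitution[where c=0 and d=1 and a=0 and b=\<xi> and g="\<lambda>x. x / \<xi>"
        and f="\<lambda>u. 1 - g u" and g'="\<lambda>_. 1 / \<xi>"])
    show "(\<lambda>x. x / \<xi>) ` {0..\<xi>} \<subseteq> {0..1}" using xi by (auto simp: field_simps)
    show "continuous_on {0..1} (\<lambda>u. 1 - g u)" by (intro continuous_intros gc)
    show "\<And>x. x \<in> {0..\<xi>} \<Longrightarrow> ((\<lambda>x. x / \<xi>) has_real_derivative 1 / \<xi>) (at x within {0..\<xi>})"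
      using xi by (auto intro!: derivative_eq_intros)
  qed (use xi in simp_all)
  moreover have "integral {0..1} (\<lambda>u. 1 - g u) = 1 - integral {0..1} g"
  proof -
    have c1: "(\<lambda>_::real. 1::real) integrable_on {0..1}" by (rule integrable_const_ivl)
    have "integral {0..1} (\<lambda>u. 1 - g u) = integral {0..1} (\<lambda>_::real. 1::real) - integral {0..1} g"
      by (rule integral_diff[OF c1 integrable_continuous_real[OF gc]])
    thus ?thesis by simp
  qed
  ultimately have "((\<lambda>x. (1 / \<xi>) * (1 - g (x / \<xi>))) has_integral (1 - integral {0..1} g)) {0..\<xi>}"
    using xi by simp
  hence "((\<lambda>x. \<xi> * ((1 / \<xi>) * (1 - g (x / \<xi>)))) has_integral \<xi> * (1 - integral {0..1} g)) {0..\<xi>}"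
    by (rule has_integral_mult_right)
  hence "((\<lambda>x. 1 - g (x / \<xi>)) has_integral \<xi> * (1 - integral {0..1} g)) {0..\<xi>}"
    using xi by simp
  thus ?thesis by blast
qed

theorem lemma1:
  fixes \<xi> :: real and lam rho :: "real poly"
  assumes "0 < \<xi>" and "\<xi> < 1"
    and "degree_distribution lam" and "degree_distribution rho"
  shows "let C = 1 - \<xi>;
             b = integral {0..1} (poly rho);
             R = 1 - integral {0..1} (poly rho) / integral {0..1} (poly lam);
             \<Delta>R = C - R
         in integral {0..1} (\<lambda>x. poly rho (1 - x))
            - integral {0..\<xi>} (\<lambda>x. 1 - the_inv_into {0..1} (poly lam) (x / \<xi>))
            = b * \<Delta>R / (\<xi> + \<Delta>R)"
proof -
  define a where "a = integral {0..1} (poly lam)"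
  define b where "b = integral {0..1} (poly rho)"
  have apos: "a > 0" using dd_int_pos[OF assms(3)] by (simp add: a_def)
  have bpos: "b > 0" using dd_int_pos[OF assms(4)] by (simp add: b_def)
  have A: "integral {0..1} (\<lambda>x. poly rho (1 - x)) = b" by (simp add: refl_int b_def)
  have B: "integral {0..\<xi>} (\<lambda>x. 1 - the_inv_into {0..1} (poly lam) (x / \<xi>)) = \<xi> * a"
    using scale_int[OF assms(1) dd_inv(3)[OF assms(3)]] inv_integral[OF assms(3)] by (simp add: a_def)
  show ?thesis
    unfolding Let_def A B a_def[symmetric] b_def[symmetric]
    using apos bpos by (simp add: field_simps)
qed
end
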